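(* Consider the following posets $P$ with typings $t$ (each typing is surjective onto $\mathbb{N}$): (i) $\mathbb{N}$ under divisibility, with $t(n,m)=m/n$ for $n\mid m$; (ii) the finite subsets $\mathscr{F}(\mathbb{N})$ of $\mathbb{N}$ under inclusion, with $t(S,T)=|T|-|S|+1$ for $S\subseteq T$; (iii) the finite-dimensional subspaces $\mathscr{V}(\mathbb{F}_q^\infty)$ of $\mathbb{F}_q^\infty$ under inclusion, with $t(U,V)=\dim V-\dim U+1$ for $U\subseteq V$; (iv) $\mathbb{N}$ under the usual order $\leqslant$, with $t(n,m)=m-n+1$ for $n\leqslant m$. Then the posets (i), (ii), (iii) have the reduced Möbius uncertainty property $\mathcal{R}$, while the poset (iv) does not.
   Context: Let $P$ be a locally finite poset. A typing is a map $t:P\times P\to\mathbb{N}\cup\{0\}$ with $t(x,y)\neq0$ iff $x\leqslant y$, such that the convolution $(f_1*f_2)(x,y)=\sum_{x\leqslant z\leqslant y}f_1(x,z)f_2(z,y)$ of two functions whose values depend only on $t(x,y)$ again depends only on $t(x,y)$. For a surjective typing, let $\left[\begin{smallmatrix} n\\ d\ \ k\end{smallmatrix}\right]$ denote the number of $z$ in an interval $[x,y]$ of type $n$ with $[x,z]$ of type $d$ and $[z,y]$ of type $k$ (independent of the choice of interval). $(P,t)$ has property $\mathcal{R}$ if for all functions $f,g:\mathbb{N}\to\mathbb{C}$, neither identically zero, satisfying $g(n)=\sum_{d,k\in\mathbb{N}}\left[\begin{smallmatrix} n\\ d\ \ k\end{smallmatrix}\right] f(k)$ for all $n\in\mathbb{N}$,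 at least one of $\{n: f(n)\neq 0\}$ and $\{n:g(n)\neq0\}$ is infinite. Concretely, the relation $g=\zeta*f$ reads: in (i) $g(n)=\sum_{d\mid n}f(d)$; in (ii) $g(n)=\sum_{k=1}^n\binom{n-1}{k-1}f(k)$; in (iii) $g(n)=\sum_{k=1}^n\binom{n-1}{k-1}_q f(k)$ with the Gaussian binomial coefficient; in (iv) $g(n)=\sum_{k=1}^n f(k)$. *)

theory Defs
  imports Complex_Main "HOL-Computational_Algebra.Primes"
begin

text \<open>Types are positive naturals. A bracket function brk n d k gives the number of
  z in an interval of type n with [x,z] of type d and [z,y] of type k.
  In all four posets the types of subintervals of an interval of type n lie in 1..n,
  so the (a priori infinite) sum over d, k reduces to 1..n.\<close>

definition propR :: "(nat \<Rightarrow> nat \<Rightarrow> nat \<Rightarrow> nat) \<Rightarrow> bool" where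
  "propR brk \<longleftrightarrow>
     (\<forall>f g :: nat \<Rightarrow> complex.
        (\<exists>n\<ge>1. f n \<noteq> 0) \<longrightarrow> (\<exists>n\<ge>1. g n \<noteq> 0) \<longrightarrow>
        (\<forall>n\<ge>1. g n = (\<Sum>d\<in>{1..n}. \<Sum>k\<in>{1..n}. of_nat (brk n d k) * f k)) \<longrightarrow>
        infinite {n. n \<ge> 1 \<and> f n \<noteq> 0} \<or> infinite {n. n \<ge> 1 \<and> g n \<noteq> 0})"

fun qbinom :: "nat \<Rightarrow> nat \<Rightarrow> nat \<Rightarrow> nat" where
  "qbinom q n 0 = 1"
| "qbinom q 0 (Suc k) = 0"
| "qbinom q (Suc n) (Suc k) = qbinom q n k + q ^ (Suc k) * qbinom q n (Suc k)"

text \<open>(i) divisibility poset, t(n,m) = m/n.\<close>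
definition brk_div :: "nat \<Rightarrow> nat \<Rightarrow> nat \<Rightarrow> nat" where
  "brk_div n d k = (if d * k = n then 1 else 0)"

text \<open>(ii) finite subsets of N, t(S,T) = |T|-|S|+1.\<close>
definition brk_fin :: "nat \<Rightarrow> nat \<Rightarrow> nat \<Rightarrow> nat" where
  "brk_fin n d k = (if d \<ge> 1 \<and> k \<ge> 1 \<and> d + k = n + 1 then (n - 1) choose (d - 1) else 0)"

text \<open>(iii) finite-dimensional subspaces of F_q^infinity, t(U,V) = dim V - dim U + 1.\<close>
definition brk_vec :: "nat \<Rightarrow> nat \<Rightarrow> nat \<Rightarrow> nat \<Rightarrow> nat" where
  "brk_vec q n d k = (if d \<ge> 1 \<and> k \<ge> 1 \<and> d + k = n + 1 then qbinom q (n - 1) (d - 1) else 0)"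

text \<open>(iv) N with usual order, t(n,m) = m-n+1.\<close>
definition brk_ord :: "nat \<Rightarrow> nat \<Rightarrow> nat \<Rightarrow> nat" where
  "brk_ord n d k = (if d \<ge> 1 \<and> k \<ge> 1 \<and> d + k = n + 1 then 1 else 0)"

end

theory Submission
  imports Defs
begin

lemma qbinom_zero: "n < k \<Longrightarrow> qbinom q n k = 0"
proof (induction q n k arbitrary: rule: qbinom.induct)
  case (1 q n) then show ?case by simp
next
  case (2 q k) then show ?case by simp
next
  case (3 q n k) then show ?case by simp
qed

lemma qbinom_one: "qbinom 1 n k = n choose k"
  by (induction "1::nat" n k rule: qbinom.induct) auto

definition TT :: "nat \<Rightarrow> (nat \<Rightarrow> complex) \<Rightarrow> nat \<Rightarrow> complex" where
  "TT q f m = (\<Sum>i\<le>m. of_nat (qbinom q m i) * f (m + 1 - i))"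

lemma TT_diff:
  assumes q: "q \<noteq> 0"
  shows "TT q f (Suc m) - TT q f m
     = of_nat q ^ m * TT q (\<lambda>k. f (k + 1) * (1 / of_nat q) ^ (k - 1)) m"
proof -
  have A: "TT q f (Suc m) = f (m + 2) + (\<Sum>i\<le>m. of_nat (qbinom q (Suc m) (Suc i)) * f (m + 1 - i))"
    unfolding TT_def by (subst sum.atMost_Suc_shift) simp
  have B: "(\<Sum>i\<le>m. of_nat (qbinom q (Suc m) (Suc i)) * f (m + 1 - i))
     = TT q f m + (\<Sum>i\<le>m. of_nat q ^ Suc i * of_nat (qbinom q m (Suc i)) * f (m + 1 - i))"
    unfolding TT_def by (simp add: sum.distrib algebra_simps)
  have C: "(\<Sum>i\<le>Suc m. of_nat q ^ i * of_nat (qbinom q m i) * f (m + 2 - i))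
     = f (m + 2) + (\<Sum>i\<le>m. of_nat q ^ Suc i * of_nat (qbinom q m (Suc i)) * f (m + 1 - i))"
    by (subst sum.atMost_Suc_shift) simp
  have D: "(\<Sum>i\<le>Suc m. of_nat q ^ i * of_nat (qbinom q m i) * f (m + 2 - i))
     = (\<Sum>i\<le>m. of_nat q ^ i * of_nat (qbinom q m i) * f (m + 2 - i))"
    by (simp add: qbinom_zero)
  have E: "(\<Sum>i\<le>m. of_nat q ^ i * of_nat (qbinom q m i) * f (m + 2 - i))
     = of_nat q ^ m * TT q (\<lambda>k. f (k + 1) * (1 / of_nat q) ^ (k - 1)) m"
    unfolding TT_def sum_distrib_left
  proof (rule sum.cong)
    fix i assume "i \<in> {..m}"
    then have i: "i \<le> m" by simp
    have "(of_nat q :: complex) ^ m * (1 / of_nat q) ^ (m - i) = of_nat q ^ i"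
    proof -
      have "(of_nat q :: complex) ^ m = of_nat q ^ i * of_nat q ^ (m - i)"
        using i by (simp add: power_add[symmetric])
      then show ?thesis using q by (simp add: power_one_over field_simps)
    qed
    moreover have "m + 1 - i + 1 = m + 2 - i" "m + 1 - i - 1 = m - i" using i by auto
    ultimately show "of_nat q ^ i * of_nat (qbinom q m i) * f (m + 2 - i) =
      of_nat q ^ m * (of_nat (qbinom q m i) * (f (m + 1 - i + 1) * (1 / of_nat q) ^ (m + 1 - i - 1)))"
      by (metis (no_types, lifting) mult.assoc mult.commute)
  qed simp
  show ?thesis using A B C D E by simp
qed

lemma TT_main:
  assumes q: "q \<noteq> 0"
  shows "\<forall>f. (\<forall>k>N. f k = 0) \<longrightarrow> (\<exists>B. \<forall>m\<ge>B. TT q f m = 0) \<longrightarrow> (\<forall>m. TT q f m = 0)"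
proof (induction N)
  case 0
  show ?case
  proof (intro allI impI)
    fix f :: "nat \<Rightarrow> complex" and m
    assume "\<forall>k>0. f k = 0"
    then show "TT q f m = 0" unfolding TT_def by (intro sum.neutral) auto
  qed
next
  case (Suc N)
  show ?case
  proof (intro allI impI)
    fix f :: "nat \<Rightarrow> complex" and m
    assume f: "\<forall>k>Suc N. f k = 0" and "\<exists>B. \<forall>m\<ge>B. TT q f m = 0"
    then obtain B where B: "\<forall>m\<ge>B. TT q f m = 0" by blast
    define h where "h = (\<lambda>k. f (k + 1) * (1 / of_nat q :: complex) ^ (k - 1))"
    have h0: "\<forall>k>N. h k = 0" using f unfolding h_def by auto
    have hB: "\<forall>m\<ge>B. TT q h m = 0"
    proof (intro allI impI)
      fix m assume "m \<ge> B"
      then have "TT q f (Suc m) - TT q f m = 0" using B by simp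
      then show "TT q h m = 0" using TT_diff[OF q, of f m] q unfolding h_def by simp
    qed
    have hz: "\<forall>m. TT q h m = 0" using Suc h0 hB by blast
    have step: "TT q f (Suc m) = TT q f m" for m
      using TT_diff[OF q, of f m] hz unfolding h_def by simp
    have "TT q f m = TT q f (m + B)"
      by (induction B) (simp_all add: step)
    then show "TT q f m = 0" using B by simp
  qed
qed

lemma inner_delta:
  fixes k n :: nat
  assumes "k \<in> {1..n}"
  shows "(\<Sum>d\<in>{1..n}. (if 1 \<le> d \<and> 1 \<le> k \<and> d + k = n + 1 then a d else 0)) = a (n + 1 - k)"
proof -
  have "(\<Sum>d\<in>{1..n}. (if 1 \<le> d \<and> 1 \<le> k \<and> d + k = n + 1 then a d else 0))
      = (\<Sum>d\<in>{1..n}. (if d = n + 1 - k then a d else 0))"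
  proof (rule sum.cong[OF refl])
    fix d
    have "(1 \<le> d \<and> 1 \<le> k \<and> d + k = n + 1) = (d = n + 1 - k)" using assms by auto
    then show "(if 1 \<le> d \<and> 1 \<le> k \<and> d + k = n + 1 then a d else 0) = (if d = n + 1 - k then a d else 0)"
      by simp
  qed
  also have "\<dots> = a (n + 1 - k)" using assms by (subst sum.delta) auto
  finally show ?thesis .
qed

lemma g_vec:
  assumes "n \<ge> 1"
  shows "(\<Sum>d\<in>{1..n}. \<Sum>k\<in>{1..n}. of_nat (brk_vec q n d k) * (f k :: complex)) = TT q f (n - 1)"
proof -
  have "(\<Sum>d\<in>{1..n}. \<Sum>k\<in>{1..n}. of_nat (brk_vec q n d k) * f k)
     = (\<Sum>k\<in>{1..n}. \<Sum>d\<in>{1..n}. of_nat (brk_vec q n d k) * f k)"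
    by (rule sum.swap)
  also have "\<dots> = (\<Sum>k\<in>{1..n}. of_nat (qbinom q (n - 1) (n - k)) * f k)"
  proof (rule sum.cong)
    fix k assume k: "k \<in> {1..n}"
    have "(\<Sum>d\<in>{1..n}. of_nat (brk_vec q n d k) * f k)
       = (\<Sum>d\<in>{1..n}. (if 1 \<le> d \<and> 1 \<le> k \<and> d + k = n + 1 then of_nat (qbinom q (n - 1) (d - 1)) * f k else 0))"
      unfolding brk_vec_def by (intro sum.cong) auto
    also have "\<dots> = of_nat (qbinom q (n - 1) (n + 1 - k - 1)) * f k"
      using inner_delta[OF k, of "\<lambda>d. of_nat (qbinom q (n - 1) (d - 1)) * f k"] by simp
    finally show "(\<Sum>d\<in>{1..n}. of_nat (brk_vec q n d k) * f k) = of_nat (qbinom q (n - 1) (n - k)) * f k"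
      by simp
  qed simp
  also have "\<dots> = (\<Sum>k\<in>{1..n}. of_nat (qbinom q (n - 1) (n - (n + 1 - k))) * f (n + 1 - k))"
    by (subst sum.atLeastAtMost_rev) simp
  also have "\<dots> = (\<Sum>i\<in>{0..n-1}. of_nat (qbinom q (n - 1) i) * f (n - 1 + 1 - i))"
    using assms
    by (intro sum.reindex_bij_witness[where i="\<lambda>i. i + 1" and j="\<lambda>k. k - 1"]) auto
  also have "\<dots> = TT q f (n - 1)" unfolding TT_def using atLeast0AtMost by presburger
  finally show ?thesis .
qed

lemma propR_vec:
  assumes q: "q \<noteq> 0"
  shows "propR (brk_vec q)"
  unfolding propR_def
proof (intro allI impI)
  fix f g :: "nat \<Rightarrow> complex"
  assume gnz: "\<exists>n\<ge>1. g n \<noteq> 0"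
    and rel: "\<forall>n\<ge>1. g n = (\<Sum>d\<in>{1..n}. \<Sum>k\<in>{1..n}. of_nat (brk_vec q n d k) * f k)"
  show "infinite {n. n \<ge> 1 \<and> f n \<noteq> 0} \<or> infinite {n. n \<ge> 1 \<and> g n \<noteq> 0}"
  proof (rule ccontr)
    assume "\<not> ?thesis"
    then have ff: "finite {n. n \<ge> 1 \<and> f n \<noteq> 0}" and fg: "finite {n. n \<ge> 1 \<and> g n \<noteq> 0}" by auto
    obtain N where N: "\<forall>n\<in>{n. n \<ge> 1 \<and> f n \<noteq> 0}. n \<le> N"
      using ff finite_nat_set_iff_bounded_le by blast
    obtain B where Bd: "\<forall>n\<in>{n. n \<ge> 1 \<and> g n \<noteq> 0}. n \<le> B"
      using fg finite_nat_set_iff_bounded_le by blast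
    have f0: "\<forall>k>N. f k = 0"
    proof (intro allI impI)
      fix k assume k: "k > N"
      show "f k = 0"
      proof (rule ccontr)
        assume "f k \<noteq> 0"
        then have "k \<in> {n. n \<ge> 1 \<and> f n \<noteq> 0}" using k by simp
        then have "k \<le> N" using N by blast
        then show False using k by simp
      qed
    qed
    have gt: "g n = TT q f (n - 1)" if "n \<ge> 1" for n using rel g_vec that by simp
    have "\<forall>m\<ge>B. TT q f m = 0"
    proof (intro allI impI)
      fix m assume "m \<ge> B"
      then have "g (m + 1) = 0" using Bd by force
      then show "TT q f m = 0" using gt[of "m+1"] by simp
    qed
    then have "\<forall>m. TT q f m = 0" using TT_main[OF q] f0 by blast
    then show False using gnz gt by auto
  qed
qed

lemma brk_fin_vec: "brk_fin = brk_vec 1"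
  by (intro ext) (simp add: brk_fin_def brk_vec_def qbinom_one qbinom_one[unfolded One_nat_def])

lemma g_div:
  assumes "n \<ge> 1"
  shows "(\<Sum>d\<in>{1..n}. \<Sum>k\<in>{1..n}. of_nat (brk_div n d k) * (f k :: complex))
       = (\<Sum>k\<in>{1..n}. if k dvd n then f k else 0)"
proof -
  have "(\<Sum>d\<in>{1..n}. \<Sum>k\<in>{1..n}. of_nat (brk_div n d k) * f k)
     = (\<Sum>k\<in>{1..n}. \<Sum>d\<in>{1..n}. of_nat (brk_div n d k) * f k)"
    by (rule sum.swap)
  also have "\<dots> = (\<Sum>k\<in>{1..n}. if k dvd n then f k else 0)"
  proof (rule sum.cong[OF refl])
    fix k assume k: "k \<in> {1..n}"
    show "(\<Sum>d\<in>{1..n}. of_nat (brk_div n d k) * f k) = (if k dvd n then f k else 0)"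
    proof (cases "k dvd n")
      case True
      have kpos: "k > 0" using k by simp
      have eq: "(d * k = n) = (d = n div k)" for d
      proof
        assume "d * k = n"
        then show "d = n div k" using kpos by (metis nonzero_mult_div_cancel_right neq0_conv)
      next
        assume "d = n div k"
        then show "d * k = n" using True by simp
      qed
      have "(\<Sum>d\<in>{1..n}. of_nat (brk_div n d k) * f k) = (\<Sum>d\<in>{1..n}. if d = n div k then f k else 0)"
        unfolding brk_div_def using eq by (intro sum.cong refl) simp
      also have "\<dots> = f k"
      proof -
        have "n div k \<ge> 1" using True k assms
          by (metis One_nat_def Suc_leI div_greater_zero_iff dvd_imp_le le_numeral_extra(2) not_le_imp_less less_le_trans zero_less_one atLeastAtMost_iff)
        moreover have "n div k \<le> n" by simp
        ultimately show ?thesis by (subst sum.delta) auto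
      qed
      finally show ?thesis using True by simp
    next
      case False
      then have "d * k \<noteq> n" for d by auto
      then show ?thesis using False unfolding brk_div_def by simp
    qed
  qed
  finally show ?thesis .
qed

lemma sum_dvd_trunc:
  fixes f :: "nat \<Rightarrow> complex"
  assumes f0: "\<forall>k>N. f k = 0" and n: "n \<ge> 1"
  shows "(\<Sum>k\<in>{1..n}. if k dvd n then f k else 0) = (\<Sum>k\<in>{1..N}. if k dvd n then f k else 0)"
proof -
  have "(\<Sum>k\<in>{1..n}. if k dvd n then f k else 0) = (\<Sum>k\<in>{1..max n N}. if k dvd n then f k else 0)"
  proof (rule sum.mono_neutral_left)
    show "\<forall>i\<in>{1..max n N} - {1..n}. (if i dvd n then f i else 0) = 0"
      using n by (auto dest: dvd_imp_le)
  qed auto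
  also have "\<dots> = (\<Sum>k\<in>{1..N}. if k dvd n then f k else 0)"
  proof (rule sum.mono_neutral_right)
    show "\<forall>i\<in>{1..max n N} - {1..N}. (if i dvd n then f i else 0) = 0"
      using f0 by auto
  qed auto
  finally show ?thesis .
qed

lemma propR_div: "propR brk_div"
  unfolding propR_def
proof (intro allI impI)
  fix f g :: "nat \<Rightarrow> complex"
  assume gnz: "\<exists>n\<ge>1. g n \<noteq> 0"
    and rel: "\<forall>n\<ge>1. g n = (\<Sum>d\<in>{1..n}. \<Sum>k\<in>{1..n}. of_nat (brk_div n d k) * f k)"
  show "infinite {n. n \<ge> 1 \<and> f n \<noteq> 0} \<or> infinite {n. n \<ge> 1 \<and> g n \<noteq> 0}"
  proof (rule ccontr)
    assume "\<not> ?thesis"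
    then have ff: "finite {n. n \<ge> 1 \<and> f n \<noteq> 0}" and fg: "finite {n. n \<ge> 1 \<and> g n \<noteq> 0}" by auto
    obtain N where N: "\<forall>n\<in>{n. n \<ge> 1 \<and> f n \<noteq> 0}. n \<le> N"
      using ff finite_nat_set_iff_bounded_le by blast
    obtain B where Bd: "\<forall>n\<in>{n. n \<ge> 1 \<and> g n \<noteq> 0}. n \<le> B"
      using fg finite_nat_set_iff_bounded_le by blast
    have f0: "\<forall>k>N. f k = 0"
    proof (intro allI impI)
      fix k assume k: "k > N"
      show "f k = 0"
      proof (rule ccontr)
        assume "f k \<noteq> 0"
        then have "k \<in> {n. n \<ge> 1 \<and> f n \<noteq> 0}" using k by simp
        then have "k \<le> N" using N by blast
        then show False using k by simp
      qed
    qed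
    define D where "D n = (\<Sum>k\<in>{1..N}. if k dvd n then f k else 0)" for n
    have gD: "g n = D n" if "n \<ge> 1" for n
      using rel that g_div sum_dvd_trunc[OF f0 that] unfolding D_def by simp
    obtain m where m: "m \<ge> 1" "g m \<noteq> 0" using gnz by blast
    obtain p where p: "prime p" "max (max N m) B < p" using bigger_prime by blast
    have "D (m * p) = D m"
      unfolding D_def
    proof (rule sum.cong[OF refl])
      fix k assume k: "k \<in> {1..N}"
      have "\<not> p dvd k" using k p by (auto dest: dvd_imp_le)
      then have "coprime k p" using p(1) by (meson coprime_commute prime_imp_coprime)
      then have "k dvd m * p \<longleftrightarrow> k dvd m" by (simp add: coprime_dvd_mult_left_iff)
      then show "(if k dvd m * p then f k else 0) = (if k dvd m then f k else 0)" by simp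
    qed
    moreover have "m * p \<ge> 1" using m p prime_gt_0_nat by (simp add: Suc_le_eq)
    ultimately have "g (m * p) \<noteq> 0" using gD m by simp
    moreover have "m * p > B"
    proof -
      have "p \<le> m * p" using m by simp
      then show ?thesis using p(2) by linarith
    qed
    ultimately have "m * p \<in> {n. n \<ge> 1 \<and> g n \<noteq> 0}" "m * p > B"
      using \<open>m * p \<ge> 1\<close> by auto
    then have "m * p \<le> B" "m * p > B" using Bd by blast+
    then show False by linarith
  qed
qed

lemma not_propR_ord: "\<not> propR brk_ord"
proof
  assume P: "propR brk_ord"
  define f :: "nat \<Rightarrow> complex" where "f k = (if k = 1 then 1 else if k = 2 then -1 else 0)" for k
  define g :: "nat \<Rightarrow> complex" where "g n = (if n = 1 then 1 else 0)" for n
  have sumf: "(\<Sum>k\<in>{1..n}. f k) = g n" if "n \<ge> 1" for n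
    using that
  proof (induction n rule: dec_induct)
    case base then show ?case by (simp add: f_def g_def)
  next
    case (step n)
    then show ?case by (cases "n = 1") (auto simp: f_def g_def)
  qed
  have rel: "\<forall>n\<ge>1. g n = (\<Sum>d\<in>{1..n}. \<Sum>k\<in>{1..n}. of_nat (brk_ord n d k) * f k)"
  proof (intro allI impI)
    fix n :: nat assume n: "n \<ge> 1"
    have "(\<Sum>d\<in>{1..n}. \<Sum>k\<in>{1..n}. of_nat (brk_ord n d k) * f k)
       = (\<Sum>k\<in>{1..n}. \<Sum>d\<in>{1..n}. of_nat (brk_ord n d k) * f k)"
      by (rule sum.swap)
    also have "\<dots> = (\<Sum>k\<in>{1..n}. f k)"
    proof (rule sum.cong[OF refl])
      fix k assume k: "k \<in> {1..n}"
      have "(\<Sum>d\<in>{1..n}. of_nat (brk_ord n d k) * f k)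
         = (\<Sum>d\<in>{1..n}. (if 1 \<le> d \<and> 1 \<le> k \<and> d + k = n + 1 then (\<lambda>d. f k) d else 0))"
        unfolding brk_ord_def by (intro sum.cong) auto
      also have "\<dots> = f k" by (rule inner_delta[OF k])
      finally show "(\<Sum>d\<in>{1..n}. of_nat (brk_ord n d k) * f k) = f k" .
    qed
    finally show "g n = (\<Sum>d\<in>{1..n}. \<Sum>k\<in>{1..n}. of_nat (brk_ord n d k) * f k)"
      using sumf n by simp
  qed
  have A: "\<exists>n\<ge>1. f n \<noteq> 0" by (rule exI[of _ 1]) (simp add: f_def)
  have B: "\<exists>n\<ge>1. g n \<noteq> 0" by (rule exI[of _ 1]) (simp add: g_def)
  have C: "{n. n \<ge> 1 \<and> f n \<noteq> 0} \<subseteq> {1, 2}" by (auto simp: f_def split: if_splits)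
  have D: "{n. n \<ge> 1 \<and> g n \<noteq> 0} \<subseteq> {1}" by (auto simp: g_def split: if_splits)
  have "infinite {n. n \<ge> 1 \<and> f n \<noteq> 0} \<or> infinite {n. n \<ge> 1 \<and> g n \<noteq> 0}"
    using P A B rel unfolding propR_def by blast
  then show False using C D finite_subset by blast
qed

theorem theorem1p8:
  shows "propR brk_div \<and> propR brk_fin
         \<and> (\<forall>q p e. prime (p::nat) \<and> e \<ge> 1 \<and> q = p ^ e \<longrightarrow> propR (brk_vec q))
         \<and> \<not> propR brk_ord"
proof (intro conjI allI impI)
  show "propR brk_div" by (rule propR_div)
  show "propR brk_fin" unfolding brk_fin_vec by (rule propR_vec) simp
  show "\<not> propR brk_ord" by (rule not_propR_ord)
  fix q p e :: nat
  assume "prime p \<and> 1 \<le> e \<and> q = p ^ e"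
  then have "q \<noteq> 0" using prime_gt_0_nat by auto
  then show "propR (brk_vec q)" by (rule propR_vec)
qed

end
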